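(* In the noiseless case $\alpha=0$, let $\mathbf{W}_t$ be the Muon iterates with learning rate $\eta=1$ started from $\mathbf{W}_0=\mathbf{0}$, and let $\widehat{\mathbf{W}}_t=\widetilde{\mathbf{E}}^\top\mathbf{W}_t\mathbf{E}$. Then for every $t\ge0$, partitioning $\widehat{\mathbf{W}}_t$ into $M^2$ blocks $(\mathbf{B}_t)_{i,j}\in\mathbb{R}^{C\times C}$ (block $(i,j)$ has rows $(i-1)C+1,\dots,iC$ and columns $(j-1)C+1,\dots,jC$): each diagonal block has the form $(\mathbf{B}_t)_{i,i}=\omega_{i,t}\mathbf{I}_C+\mu_{i,t}(\mathbf{J}_C-\mathbf{I}_C)$, and each off-diagonal block ($i\ne j$) has the form $(\mathbf{B}_t)_{i,j}=\gamma_{i,j,t}\mathbf{J}_C$, for real numbers $\omega_{i,t}=(\widehat{\mathbf{W}}_t)_{C(i-1)+1,C(i-1)+1}$, $\mu_{i,t}=(\widehat{\mathbf{W}}_t)_{C(i-1)+2,C(i-1)+1}$, $\gamma_{i,j,t}=(\widehat{\mathbf{W}}_t)_{C(i-1)+1,C(j-1)+1}$.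
   Context: Setup: $K=MC$ items in $M$ groups of $C\ge2$ items; $\widetilde p_1>\dots>\widetilde p_M>0$, $\sum_i\widetilde p_i=1$, $p_j=\widetilde p_i/C$ for $j\in\{(i-1)C+1,\dots,iC\}$. $\mathbf{E},\widetilde{\mathbf{E}}\in\mathbb{R}^{K\times K}$ are orthogonal with columns $\mathbf{E}_j,\widetilde{\mathbf{E}}_j$. Noiseless labels: $p_{i\mid j}=1$ if $i=j$, $0$ otherwise. $\widehat p_{i\mid j}(\mathbf{W})=\exp(\widetilde{\mathbf{E}}_i^\top\mathbf{W}\mathbf{E}_j)/\sum_k\exp(\widetilde{\mathbf{E}}_k^\top\mathbf{W}\mathbf{E}_j)$; $\mathcal{L}(\mathbf{W})=-\sum_jp_j\log\widehat p_{j\mid j}(\mathbf{W})$. Muon: $\mathbf{W}_{t+1}=\mathbf{W}_t-\eta\,\mathrm{msgn}(\nabla\mathcal{L}(\mathbf{W}_t))$, $\mathrm{msgn}(\mathbf{U}\boldsymbol\Sigma\mathbf{V}^\top)=\mathbf{U}\,\mathrm{sgn}(\boldsymbol\Sigma)\mathbf{V}^\top$. $\mathbf{J}_C$ is the $C\times C$ all-ones matrix. *)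

theory Defs
  imports "HOL-Analysis.Analysis"
begin

text \<open>K x K real matrices are represented as functions nat => nat => real; only the
  entries with indices < K are meaningful. Indices are 0-based.\<close>

type_synonym mat = "nat \<Rightarrow> nat \<Rightarrow> real"

definition mmul :: "nat \<Rightarrow> mat \<Rightarrow> mat \<Rightarrow> mat" where
  "mmul K A B = (\<lambda>i j. \<Sum>k<K. A i k * B k j)"

definition mtrans :: "mat \<Rightarrow> mat" where
  "mtrans A = (\<lambda>i j. A j i)"

definition orthogonal_mat :: "nat \<Rightarrow> mat \<Rightarrow> bool" where
  "orthogonal_mat K U \<longleftrightarrow>
     (\<forall>i<K. \<forall>j<K. (\<Sum>k<K. U k i * U k j) = (if i = j then 1 else 0))"

definition is_svd :: "nat \<Rightarrow> mat \<Rightarrow> mat \<Rightarrow> mat \<Rightarrow> mat \<Rightarrow> bool" where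
  "is_svd K G U S V \<longleftrightarrow> orthogonal_mat K U \<and> orthogonal_mat K V \<and>
     (\<forall>i<K. \<forall>j<K. i \<noteq> j \<longrightarrow> S i j = 0) \<and> (\<forall>i<K. S i i \<ge> 0) \<and>
     (\<forall>i<K. \<forall>j<K. G i j = mmul K (mmul K U S) (mtrans V) i j)"

text \<open>Matrix sign: msgn(U S V^T) = U sgn(S) V^T (independent of the chosen SVD).\<close>
definition msgn :: "nat \<Rightarrow> mat \<Rightarrow> mat" where
  "msgn K G = (case (SOME (U, S, V). is_svd K G U S V) of (U, S, V) \<Rightarrow>
      mmul K (mmul K U (\<lambda>i j. sgn (S i j))) (mtrans V))"

definition logit :: "nat \<Rightarrow> mat \<Rightarrow> mat \<Rightarrow> mat \<Rightarrow> nat \<Rightarrow> nat \<Rightarrow> real" where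
  "logit K Et E W i j = (\<Sum>a<K. \<Sum>b<K. Et a i * W a b * E b j)"

definition phat :: "nat \<Rightarrow> mat \<Rightarrow> mat \<Rightarrow> mat \<Rightarrow> nat \<Rightarrow> nat \<Rightarrow> real" where
  "phat K Et E W i j = exp (logit K Et E W i j) / (\<Sum>k<K. exp (logit K Et E W k j))"

definition loss :: "nat \<Rightarrow> (nat \<Rightarrow> real) \<Rightarrow> mat \<Rightarrow> mat \<Rightarrow> mat \<Rightarrow> real" where
  "loss K p Et E W = - (\<Sum>j<K. p j * ln (phat K Et E W j j))"

definition grad :: "(mat \<Rightarrow> real) \<Rightarrow> mat \<Rightarrow> mat" where
  "grad L W = (\<lambda>a b. deriv (\<lambda>s. L (\<lambda>x y. W x y + s * (if x = a \<and> y = b then 1 else 0))) 0)"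

primrec muon :: "nat \<Rightarrow> (mat \<Rightarrow> real) \<Rightarrow> real \<Rightarrow> mat \<Rightarrow> nat \<Rightarrow> mat" where
  "muon K L eta W0 0 = W0"
| "muon K L eta W0 (Suc t) =
     (\<lambda>a b. muon K L eta W0 t a b - eta * msgn K (grad L (muon K L eta W0 t)) a b)"

end

theory Submission
  imports Defs "Jordan_Normal_Form.Char_Poly" "HOL-Computational_Algebra.Fundamental_Theorem_Algebra"
begin
hide_type (open) Matrix.mat
hide_const (open) Matrix.orthogonal_mat

lemma complex_eigvec:
  fixes C :: "nat \<Rightarrow> nat \<Rightarrow> real" and m :: nat
  assumes m: "m > 0"
  shows "\<exists>z w. (\<exists>i<m. w i \<noteq> 0) \<and> (\<forall>i<m. (\<Sum>j<m. complex_of_real (C i j) * w j) = z * w i)"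
proof -
  define A :: "complex Matrix.mat" where "A = Matrix.mat m m (\<lambda>(i,j). complex_of_real (C i j))"
  have A: "A \<in> carrier_mat m m" unfolding A_def by simp
  have "degree (char_poly A) = m" using degree_monic_char_poly[OF A] by simp
  hence "\<not> constant (poly (char_poly A))" using m constant_degree[of "char_poly A"] by simp
  then obtain z where "poly (char_poly A) z = 0" using fundamental_theorem_of_algebra by blast
  hence "eigenvalue A z" using eigenvalue_root_char_poly[OF A] by simp
  then obtain v where ev: "eigenvector A v z" unfolding eigenvalue_def by blast
  hence v: "v \<in> carrier_vec m" "v \<noteq> 0\<^sub>v m" "A *\<^sub>v v = z \<cdot>\<^sub>v v" using A unfolding eigenvector_def by auto
  have "\<exists>i<m. v $ i \<noteq> 0"
  proof (rule ccontr)
    assume "\<not> ?thesis"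
    hence "v = 0\<^sub>v m" using v(1) by (intro eq_vecI) auto
    thus False using v(2) by simp
  qed
  moreover have "\<forall>i<m. (\<Sum>j<m. complex_of_real (C i j) * v $ j) = z * v $ i"
  proof (intro allI impI)
    fix i assume i: "i < m"
    have "(A *\<^sub>v v) $ i = z * v $ i" using v(3) v(1) i by simp
    moreover have "(A *\<^sub>v v) $ i = (\<Sum>j<m. complex_of_real (C i j) * v $ j)"
      using i v(1) unfolding A_def by (simp add: scalar_prod_def lessThan_atLeast0)
    ultimately show "(\<Sum>j<m. complex_of_real (C i j) * v $ j) = z * v $ i" by simp
  qed
  ultimately show ?thesis by blast
qed

lemma real_eigvec:
  fixes C :: "nat \<Rightarrow> nat \<Rightarrow> real" and m :: nat
  assumes m: "m > 0" and sym: "\<forall>i<m. \<forall>j<m. C i j = C j i"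
  shows "\<exists>lam y. (\<exists>i<m. y i \<noteq> 0) \<and> (\<forall>i<m. (\<Sum>j<m. C i j * y j) = lam * y i)"
proof -
  obtain z w where nz: "\<exists>i<m. w i \<noteq> 0" and ev: "\<forall>i<m. (\<Sum>j<m. complex_of_real (C i j) * w j) = z * w i"
    using complex_eigvec[OF m] by blast
  define s where "s = (\<Sum>i<m. (cmod (w i))^2)"
  obtain i0 where i0: "i0 < m" "w i0 \<noteq> 0" using nz by blast
  have "s \<ge> (cmod (w i0))^2" unfolding s_def
    by (rule member_le_sum) (use i0 in auto)
  moreover have "(cmod (w i0))^2 > 0" using i0 by simp
  ultimately have spos: "s > 0" by linarith
  define T where "T = (\<Sum>i<m. \<Sum>j<m. complex_of_real (C i j) * (cnj (w i) * w j))"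
  have T1: "T = z * complex_of_real s"
  proof -
    have "T = (\<Sum>i<m. cnj (w i) * (\<Sum>j<m. complex_of_real (C i j) * w j))"
      unfolding T_def by (simp add: sum_distrib_left algebra_simps)
    also have "\<dots> = (\<Sum>i<m. z * (cnj (w i) * w i))"
      using ev by (intro sum.cong) auto
    also have "\<dots> = z * (\<Sum>i<m. complex_of_real ((cmod (w i))^2))"
    proof -
      have "\<And>i. cnj (w i) * w i = complex_of_real ((cmod (w i))^2)"
        by (subst mult.commute) (rule complex_norm_square[symmetric])
      thus ?thesis by (simp only: sum_distrib_left)
    qed
    also have "(\<Sum>i<m. complex_of_real ((cmod (w i))^2)) = complex_of_real s"
      unfolding s_def by (simp only: of_real_sum)
    finally show ?thesis .
  qed
  have T2: "cnj T = T"
  proof -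
    have "cnj T = (\<Sum>i<m. \<Sum>j<m. complex_of_real (C i j) * (w i * cnj (w j)))"
      unfolding T_def by (simp add: cnj_sum)
    also have "\<dots> = (\<Sum>j<m. \<Sum>i<m. complex_of_real (C i j) * (w i * cnj (w j)))"
      by (rule sum.swap)
    also have "\<dots> = T" unfolding T_def
      using sym by (intro sum.cong refl) (auto simp: mult.commute)
    finally show ?thesis .
  qed
  have "Im z = 0"
  proof -
    have "Im T = 0" using arg_cong[OF T2, of Im] by simp
    hence "Im z * s = 0" using T1 by simp
    thus ?thesis using spos by simp
  qed
  hence zr: "z = complex_of_real (Re z)" by (simp add: complex_eq_iff)
  have evR: "\<forall>i<m. (\<Sum>j<m. C i j * Re (w j)) = Re z * Re (w i)"
  proof (intro allI impI)
    fix i assume "i < m"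
    hence "Re (\<Sum>j<m. complex_of_real (C i j) * w j) = Re (z * w i)" using ev by simp
    thus "(\<Sum>j<m. C i j * Re (w j)) = Re z * Re (w i)" using \<open>Im z = 0\<close> by (simp add: Re_sum)
  qed
  have evI: "\<forall>i<m. (\<Sum>j<m. C i j * Im (w j)) = Re z * Im (w i)"
  proof (intro allI impI)
    fix i assume "i < m"
    hence "Im (\<Sum>j<m. complex_of_real (C i j) * w j) = Im (z * w i)" using ev by simp
    thus "(\<Sum>j<m. C i j * Im (w j)) = Re z * Im (w i)" using \<open>Im z = 0\<close> by (simp add: Im_sum)
  qed
  show ?thesis
  proof (cases "Re (w i0) = 0")
    case True
    hence "Im (w i0) \<noteq> 0" using i0 complex_eq_iff by auto
    thus ?thesis using evI i0 by (intro exI[of _ "Re z"] exI[of _ "\<lambda>j. Im (w j)"]) auto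
  next
    case False
    thus ?thesis using evR i0 by (intro exI[of _ "Re z"] exI[of _ "\<lambda>j. Re (w j)"]) auto
  qed
qed

definition ip :: "nat \<Rightarrow> (nat \<Rightarrow> real) \<Rightarrow> (nat \<Rightarrow> real) \<Rightarrow> real" where
  "ip n x y = (\<Sum>k<n. x k * y k)"

definition orthon :: "nat \<Rightarrow> nat set \<Rightarrow> (nat \<Rightarrow> nat \<Rightarrow> real) \<Rightarrow> bool" where
  "orthon n I u \<longleftrightarrow> (\<forall>i\<in>I. \<forall>j\<in>I. ip n (u i) (u j) = (if i = j then 1 else 0))"

definition resid :: "nat \<Rightarrow> nat set \<Rightarrow> (nat \<Rightarrow> nat \<Rightarrow> real) \<Rightarrow> (nat \<Rightarrow> real) \<Rightarrow> nat \<Rightarrow> real" where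
  "resid n I u y = (\<lambda>k. y k - (\<Sum>i\<in>I. ip n (u i) y * u i k))"

lemma ip_sym: "ip n x y = ip n y x"
  unfolding ip_def by (simp add: mult.commute)

lemma ip_resid_left: "ip n x (resid n I u y) = ip n x y - (\<Sum>i\<in>I. ip n (u i) y * ip n x (u i))"
proof -
  define c where "c i = ip n (u i) y" for i
  have "(\<Sum>k<n. x k * (\<Sum>i\<in>I. c i * u i k)) = (\<Sum>k<n. \<Sum>i\<in>I. x k * (c i * u i k))"
    by (simp add: sum_distrib_left)
  also have "\<dots> = (\<Sum>i\<in>I. \<Sum>k<n. x k * (c i * u i k))" by (rule sum.swap)
  also have "\<dots> = (\<Sum>i\<in>I. c i * (\<Sum>k<n. x k * u i k))"
    by (simp add: sum_distrib_left mult_ac)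
  finally have "(\<Sum>k<n. x k * (\<Sum>i\<in>I. c i * u i k)) = (\<Sum>i\<in>I. c i * ip n x (u i))"
    unfolding ip_def .
  thus ?thesis unfolding resid_def c_def[symmetric]
    by (simp add: ip_def right_diff_distrib sum_subtractf)
qed

lemma resid_orth:
  assumes "finite I" "orthon n I u" "j \<in> I"
  shows "ip n (u j) (resid n I u y) = 0"
proof -
  have "(\<Sum>i\<in>I. ip n (u i) y * ip n (u j) (u i)) = ip n (u j) y"
  proof -
    have "(\<Sum>i\<in>I. ip n (u i) y * ip n (u j) (u i)) = (\<Sum>i\<in>I. if i = j then ip n (u j) y else 0)"
      using assms(2,3) unfolding orthon_def by (intro sum.cong) auto
    also have "\<dots> = ip n (u j) y" using assms(1,3) by simp
    finally show ?thesis .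
  qed
  thus ?thesis using ip_resid_left by simp
qed

lemma resid_norm:
  assumes "finite I" "orthon n I u"
  shows "ip n (resid n I u y) (resid n I u y) = ip n y y - (\<Sum>i\<in>I. (ip n (u i) y)^2)"
proof -
  have "ip n (resid n I u y) (resid n I u y) = ip n (resid n I u y) y"
  proof -
    have "(\<Sum>i\<in>I. ip n (u i) y * ip n (resid n I u y) (u i)) = 0"
      using resid_orth[OF assms] by (simp add: ip_sym)
    thus ?thesis using ip_resid_left[of n "resid n I u y" I u y] by simp
  qed
  also have "\<dots> = ip n y (resid n I u y)" by (rule ip_sym)
  also have "\<dots> = ip n y y - (\<Sum>i\<in>I. (ip n (u i) y)^2)"
    using ip_resid_left by (simp add: ip_sym power2_eq_square)
  finally show ?thesis .
qed

lemma ip_self_nonneg: "ip n x x \<ge> 0"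
  unfolding ip_def by (intro sum_nonneg) simp

lemma ip_self_zero: "ip n x x = 0 \<Longrightarrow> k < n \<Longrightarrow> x k = 0"
  unfolding ip_def
  using sum_nonneg_eq_0_iff[of "{..<n}" "\<lambda>k. x k * x k"] by simp

definition unitv :: "nat \<Rightarrow> nat \<Rightarrow> real" where "unitv j = (\<lambda>k. if k = j then 1 else 0)"

lemma ip_unitv: "j < n \<Longrightarrow> ip n x (unitv j) = x j"
  unfolding ip_def unitv_def by (simp add: if_distrib cong: if_cong)

lemma bessel_unit:
  assumes "finite I" "orthon n I u" "j < n"
  shows "(\<Sum>i\<in>I. (u i j)^2) = 1 - ip n (resid n I u (unitv j)) (resid n I u (unitv j))"
  using resid_norm[OF assms(1,2), of "unitv j"] ip_unitv[OF assms(3)] by (simp add: unitv_def)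

lemma orthon_card:
  assumes "finite I" "orthon n I u"
  shows "card I \<le> n"
proof -
  have "real (card I) = (\<Sum>i\<in>I. ip n (u i) (u i))"
    using assms(2) unfolding orthon_def by simp
  also have "\<dots> = (\<Sum>j<n. \<Sum>i\<in>I. (u i j)^2)"
    unfolding ip_def by (simp add: sum.swap[of _ I] power2_eq_square)
  also have "\<dots> \<le> (\<Sum>j<n. 1)"
  proof (intro sum_mono)
    fix j assume "j \<in> {..<n}"
    thus "(\<Sum>i\<in>I. (u i j)^2) \<le> 1"
      using bessel_unit[OF assms, of j] ip_self_nonneg[of n "resid n I u (unitv j)"] by simp
  qed
  finally show ?thesis by simp
qed

lemma orthon_extend:
  assumes "finite I" "orthon n I u" "card I < n"
  shows "\<exists>x. ip n x x = 1 \<and> (\<forall>i\<in>I. ip n (u i) x = 0)"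
proof -
  have "\<exists>j<n. ip n (resid n I u (unitv j)) (resid n I u (unitv j)) \<noteq> 0"
  proof (rule ccontr)
    assume "\<not> ?thesis"
    hence "\<forall>j<n. (\<Sum>i\<in>I. (u i j)^2) = 1" using bessel_unit[OF assms(1,2)] by simp
    hence "(\<Sum>j<n. \<Sum>i\<in>I. (u i j)^2) = n" by simp
    moreover have "(\<Sum>j<n. \<Sum>i\<in>I. (u i j)^2) = (\<Sum>i\<in>I. ip n (u i) (u i))"
      unfolding ip_def by (simp add: sum.swap[of _ I] power2_eq_square)
    moreover have "(\<Sum>i\<in>I. ip n (u i) (u i)) = card I"
      using assms(2) unfolding orthon_def by simp
    ultimately show False using assms(3) by simp
  qed
  then obtain j where j: "j < n" and nz: "ip n (resid n I u (unitv j)) (resid n I u (unitv j)) \<noteq> 0" by blast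
  define r where "r = resid n I u (unitv j)"
  define c where "c = sqrt (ip n r r)"
  have cpos: "c > 0" using nz ip_self_nonneg[of n r] unfolding c_def r_def by simp
  define x where "x = (\<lambda>k. r k / c)"
  have "ip n x x = ip n r r / c^2" unfolding x_def ip_def by (simp add: sum_divide_distrib power2_eq_square)
  also have "\<dots> = 1" using cpos ip_self_nonneg[of n r] unfolding c_def by simp
  finally have "ip n x x = 1" .
  moreover have "\<forall>i\<in>I. ip n (u i) x = 0"
  proof
    fix i assume "i \<in> I"
    hence "ip n (u i) r = 0" unfolding r_def using resid_orth[OF assms(1,2)] by blast
    thus "ip n (u i) x = 0" unfolding x_def ip_def by (simp add: sum_divide_distrib[symmetric])
  qed
  ultimately show ?thesis by blast
qed

lemma orthon_insert:
  assumes "orthon n I u" "j \<notin> I" "ip n x x = 1" "\<forall>i\<in>I. ip n (u i) x = 0"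
  shows "orthon n (insert j I) (u(j := x))"
  unfolding orthon_def
proof (intro ballI)
  fix i k assume i: "i \<in> insert j I" and k: "k \<in> insert j I"
  show "ip n ((u(j := x)) i) ((u(j := x)) k) = (if i = k then 1 else 0)"
  proof (cases "i = j")
    case True
    show ?thesis
    proof (cases "k = j")
      case True
      thus ?thesis using \<open>i = j\<close> assms(3) by simp
    next
      case False
      hence "k \<in> I" using k by simp
      hence "ip n (u k) x = 0" using assms(4) by blast
      thus ?thesis using \<open>i = j\<close> False by (simp add: ip_sym[of n x])
    qed
  next
    case False
    hence iI: "i \<in> I" using i by simp
    show ?thesis
    proof (cases "k = j")
      case True
      thus ?thesis using False iI assms(4) by simp
    next
      case False
      hence "k \<in> I" using k by simp
      thus ?thesis using \<open>i \<noteq> j\<close> False iI assms(1) unfolding orthon_def by simp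
    qed
  qed
qed

lemma orthon_mono: "orthon n I u \<Longrightarrow> J \<subseteq> I \<Longrightarrow> orthon n J u"
  unfolding orthon_def by blast

lemma orthon_complete_aux:
  "\<forall>I u. I \<subseteq> {..<n} \<longrightarrow> card ({..<n} - I) = d \<longrightarrow> orthon n I u \<longrightarrow>
     (\<exists>u'. (\<forall>i\<in>I. u' i = u i) \<and> orthon n {..<n} u')"
proof (induction d)
  case 0
  show ?case
  proof (intro allI impI)
    fix I u assume "I \<subseteq> {..<n}" "card ({..<n} - I) = 0" "orthon n I u"
    hence "{..<n} - I = {}" by simp
    hence "I = {..<n}" using \<open>I \<subseteq> {..<n}\<close> by blast
    thus "\<exists>u'. (\<forall>i\<in>I. u' i = u i) \<and> orthon n {..<n} u'" using \<open>orthon n I u\<close> by blast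
  qed
next
  case (Suc d)
  show ?case
  proof (intro allI impI)
    fix I u assume I: "I \<subseteq> {..<n}" and c: "card ({..<n} - I) = Suc d" and o: "orthon n I u"
    have "{..<n} - I \<noteq> {}"
    proof
      assume h: "{..<n} - I = {}"
      have "card ({..<n} - I) = 0" unfolding h by simp
      thus False using c by simp
    qed
    then obtain j where j: "j \<in> {..<n} - I" by blast
    have fI: "finite I" using I finite_subset by blast
    have "card I < n"
    proof -
      have "I \<subset> {..<n}" using I j by auto
      thus ?thesis using psubset_card_mono[of "{..<n}" I] by simp
    qed
    then obtain x where x: "ip n x x = 1" "\<forall>i\<in>I. ip n (u i) x = 0"
      using orthon_extend[OF fI o] by blast
    have o2: "orthon n (insert j I) (u(j := x))" using orthon_insert[OF o _ x] j by blast
    have "{..<n} - insert j I = ({..<n} - I) - {j}" by auto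
    hence "card ({..<n} - insert j I) = d" using c j by (simp add: card_Diff_singleton)
    moreover have "insert j I \<subseteq> {..<n}" using I j by auto
    ultimately obtain u' where u1: "\<forall>i\<in>insert j I. u' i = (u(j := x)) i" and u2: "orthon n {..<n} u'"
      using Suc.IH[rule_format, OF _ _ o2] by blast
    have "\<forall>i\<in>I. u' i = u i"
    proof
      fix i assume "i \<in> I"
      hence "i \<noteq> j" "i \<in> insert j I" using j by auto
      thus "u' i = u i" using u1 by simp
    qed
    thus "\<exists>u'. (\<forall>i\<in>I. u' i = u i) \<and> orthon n {..<n} u'" using u2 by blast
  qed
qed

lemma orthon_complete:
  assumes "I \<subseteq> {..<n}" "orthon n I u"
  shows "\<exists>u'. (\<forall>i\<in>I. u' i = u i) \<and> orthon n {..<n} u'"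
  using orthon_complete_aux[rule_format, OF assms(1) refl assms(2)] .

lemma orthon_expand:
  assumes o: "orthon n {..<n} u" and k: "k < n"
  shows "y k = (\<Sum>i<n. ip n (u i) y * u i k)"
proof -
  define r where "r = resid n {..<n} u y"
  have "ip n r r = 0"
  proof (rule ccontr)
    assume nz: "ip n r r \<noteq> 0"
    define c where "c = sqrt (ip n r r)"
    have cpos: "c > 0" using nz ip_self_nonneg[of n r] unfolding c_def by simp
    define x where "x = (\<lambda>k. r k / c)"
    have "ip n x x = ip n r r / c^2" unfolding x_def ip_def by (simp add: sum_divide_distrib power2_eq_square)
    also have "\<dots> = 1" using cpos ip_self_nonneg[of n r] unfolding c_def by simp
    finally have x1: "ip n x x = 1" .
    have x2: "\<forall>i\<in>{..<n}. ip n (u i) x = 0"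
    proof
      fix i assume "i \<in> {..<n}"
      hence "ip n (u i) r = 0" unfolding r_def using resid_orth[OF _ o] by blast
      thus "ip n (u i) x = 0" unfolding x_def ip_def by (simp add: sum_divide_distrib[symmetric])
    qed
    have "orthon n (insert n {..<n}) (u(n := x))" using orthon_insert[OF o _ x1 x2] by simp
    from orthon_card[OF _ this] show False by simp
  qed
  hence "r k = 0" using ip_self_zero k by blast
  thus ?thesis unfolding r_def resid_def by simp
qed

lemma sum_split_nat:
  fixes k n :: nat
  assumes "k \<le> n"
  shows "(\<Sum>i<n. f i) = (\<Sum>i<k. f i) + (\<Sum>a<n-k. f (k+a))"
proof -
  obtain d where n: "n = k + d" using assms le_Suc_ex by blast
  have "(\<Sum>i<k+d. f i) = (\<Sum>i<k. f i) + (\<Sum>a<d. f (k+a))"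
    by (induction d) (auto simp: add.assoc)
  thus ?thesis using n by simp
qed

definition mv :: "nat \<Rightarrow> (nat \<Rightarrow> nat \<Rightarrow> real) \<Rightarrow> (nat \<Rightarrow> real) \<Rightarrow> nat \<Rightarrow> real" where
  "mv n B x = (\<lambda>k. \<Sum>l<n. B k l * x l)"

lemma ip_mv_sym:
  assumes "\<forall>i<n. \<forall>j<n. B i j = B j i"
  shows "ip n x (mv n B y) = ip n (mv n B x) y"
proof -
  have "ip n x (mv n B y) = (\<Sum>k<n. \<Sum>l<n. x k * B k l * y l)"
    unfolding ip_def mv_def by (simp add: sum_distrib_left mult_ac)
  also have "\<dots> = (\<Sum>l<n. \<Sum>k<n. x k * B k l * y l)" by (rule sum.swap)
  also have "\<dots> = (\<Sum>l<n. y l * (\<Sum>k<n. B l k * x k))"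
    unfolding sum_distrib_left by (intro sum.cong refl) (use assms in \<open>auto simp: mult_ac\<close>)
  also have "\<dots> = ip n (mv n B x) y" unfolding ip_def mv_def by (simp add: mult.commute)
  finally show ?thesis .
qed

lemma ip_cong: "(\<And>r. r < n \<Longrightarrow> f r = g r) \<Longrightarrow> ip n f h = ip n g h"
  unfolding ip_def by (intro sum.cong) auto

lemma ip_sum_right: "ip n x (\<lambda>r. \<Sum>b\<in>S. c b * w b r) = (\<Sum>b\<in>S. c b * ip n x (w b))"
proof -
  have "ip n x (\<lambda>r. \<Sum>b\<in>S. c b * w b r) = (\<Sum>r<n. \<Sum>b\<in>S. c b * (x r * w b r))"
    unfolding ip_def by (simp add: sum_distrib_left mult_ac)
  also have "\<dots> = (\<Sum>b\<in>S. \<Sum>r<n. c b * (x r * w b r))" by (rule sum.swap)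
  also have "\<dots> = (\<Sum>b\<in>S. c b * ip n x (w b))" unfolding ip_def by (simp add: sum_distrib_left)
  finally show ?thesis .
qed

lemma mv_sum: "mv n B (\<lambda>r. \<Sum>b\<in>S. c b * w b r) r' = (\<Sum>b\<in>S. c b * mv n B (w b) r')"
proof -
  have "mv n B (\<lambda>r. \<Sum>b\<in>S. c b * w b r) r' = (\<Sum>l<n. \<Sum>b\<in>S. c b * (B r' l * w b l))"
    unfolding mv_def by (simp add: sum_distrib_left mult_ac)
  also have "\<dots> = (\<Sum>b\<in>S. \<Sum>l<n. c b * (B r' l * w b l))" by (rule sum.swap)
  also have "\<dots> = (\<Sum>b\<in>S. c b * mv n B (w b) r')" unfolding mv_def by (simp add: sum_distrib_left)
  finally show ?thesis .
qed

lemma spectral_aux: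
  fixes B :: "nat \<Rightarrow> nat \<Rightarrow> real"
  assumes sym: "\<forall>i<n. \<forall>j<n. B i j = B j i"
  shows "k \<le> n \<Longrightarrow> \<exists>v lam. orthon n {..<k} v \<and> (\<forall>i<k. \<forall>r<n. mv n B (v i) r = lam i * v i r)"
proof (induction k)
  case 0
  show ?case unfolding orthon_def by simp
next
  case (Suc k)
  hence kn: "k < n" by simp
  obtain v lam where vo: "orthon n {..<k} v" and ve: "\<forall>i<k. \<forall>r<n. mv n B (v i) r = lam i * v i r"
    using Suc.IH kn by auto
  obtain u' where u1: "\<forall>i\<in>{..<k}. u' i = v i" and u2: "orthon n {..<n} u'"
    using orthon_complete[OF _ vo] kn by auto
  define m where "m = n - k"
  have m: "m > 0" using kn unfolding m_def by simp
  define w where "w b = u' (k + b)" for b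
  define Cm where "Cm a b = ip n (w a) (mv n B (w b))" for a b
  have Csym: "\<forall>a<m. \<forall>b<m. Cm a b = Cm b a"
    unfolding Cm_def using ip_mv_sym[OF sym] ip_sym by metis
  obtain lm y where ynz: "\<exists>a<m. y a \<noteq> 0" and yev: "\<forall>a<m. (\<Sum>b<m. Cm a b * y b) = lm * y a"
    using real_eigvec[OF m Csym] by blast
  have F1: "ip n (v i) (w b) = 0" if "i < k" "b < m" for i b
  proof -
    have "ip n (u' i) (u' (k+b)) = 0" using u2 that unfolding orthon_def m_def by auto
    thus ?thesis using u1 that unfolding w_def by simp
  qed
  have F2: "ip n (w a) (w b) = (if a = b then 1 else 0)" if "a < m" "b < m" for a b
    using u2 that unfolding orthon_def m_def w_def by auto
  have F3: "mv n B (w b) r = (\<Sum>a<m. Cm a b * w a r)" if b: "b < m" and r: "r < n" for b r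
  proof -
    have "mv n B (w b) r = (\<Sum>i<n. ip n (u' i) (mv n B (w b)) * u' i r)"
      by (rule orthon_expand[OF u2 r])
    also have "\<dots> = (\<Sum>i<k. ip n (u' i) (mv n B (w b)) * u' i r) + (\<Sum>a<m. ip n (u' (k+a)) (mv n B (w b)) * u' (k+a) r)"
      unfolding m_def by (rule sum_split_nat) (use kn in simp)
    also have "(\<Sum>i<k. ip n (u' i) (mv n B (w b)) * u' i r) = 0"
    proof (intro sum.neutral ballI)
      fix i assume "i \<in> {..<k}"
      hence i: "i < k" by simp
      have "ip n (u' i) (mv n B (w b)) = ip n (mv n B (v i)) (w b)"
        using u1 i ip_mv_sym[OF sym] by simp
      also have "\<dots> = ip n (\<lambda>r. lam i * v i r) (w b)"
        by (rule ip_cong) (use ve i in simp)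
      also have "\<dots> = lam i * ip n (v i) (w b)" unfolding ip_def by (simp add: sum_distrib_left mult_ac)
      also have "\<dots> = 0" using F1 i b by simp
      finally show "ip n (u' i) (mv n B (w b)) * u' i r = 0" by simp
    qed
    finally show ?thesis unfolding Cm_def w_def by simp
  qed
  define x where "x r = (\<Sum>b<m. y b * w b r)" for r
  have F4: "mv n B x r = lm * x r" if r: "r < n" for r
  proof -
    have "mv n B x r = (\<Sum>b<m. y b * mv n B (w b) r)"
      unfolding x_def[abs_def] by (rule mv_sum)
    also have "\<dots> = (\<Sum>b<m. y b * (\<Sum>a<m. Cm a b * w a r))"
      using F3 r by simp
    also have "\<dots> = (\<Sum>b<m. \<Sum>a<m. y b * Cm a b * w a r)"
      by (simp add: sum_distrib_left mult_ac)
    also have "\<dots> = (\<Sum>a<m. \<Sum>b<m. y b * Cm a b * w a r)" by (rule sum.swap)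
    also have "\<dots> = (\<Sum>a<m. (\<Sum>b<m. Cm a b * y b) * w a r)"
      unfolding sum_distrib_right by (intro sum.cong refl) (simp add: mult_ac)
    also have "\<dots> = (\<Sum>a<m. lm * y a * w a r)" using yev by simp
    also have "\<dots> = lm * x r" unfolding x_def by (simp add: sum_distrib_left mult_ac)
    finally show ?thesis .
  qed
  have F5: "ip n (v i) x = 0" if "i < k" for i
  proof -
    have "ip n (v i) x = (\<Sum>b<m. y b * ip n (v i) (w b))"
      unfolding x_def[abs_def] by (rule ip_sum_right)
    also have "\<dots> = 0" using F1 that by simp
    finally show ?thesis .
  qed
  have F6: "ip n x x = (\<Sum>a<m. (y a)^2)"
  proof -
    have "ip n x x = (\<Sum>b<m. y b * ip n x (w b))"
      unfolding x_def[abs_def] by (rule ip_sum_right)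
    also have "\<dots> = (\<Sum>b<m. y b * (\<Sum>a<m. y a * ip n (w b) (w a)))"
    proof (intro sum.cong refl)
      fix b
      have "ip n x (w b) = ip n (w b) x" by (rule ip_sym)
      also have "\<dots> = (\<Sum>a<m. y a * ip n (w b) (w a))"
        unfolding x_def[abs_def] by (rule ip_sum_right)
      finally show "y b * ip n x (w b) = y b * (\<Sum>a<m. y a * ip n (w b) (w a))" by simp
    qed
    also have "\<dots> = (\<Sum>b<m. y b * (\<Sum>a<m. if b = a then y a else 0))"
    proof (intro sum.cong refl)
      fix b assume b: "b \<in> {..<m}"
      have "(\<Sum>a<m. y a * ip n (w b) (w a)) = (\<Sum>a<m. if b = a then y a else 0)"
        using F2 b by (intro sum.cong refl) auto
      thus "y b * (\<Sum>a<m. y a * ip n (w b) (w a)) = y b * (\<Sum>a<m. if b = a then y a else 0)" by simp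
    qed
    also have "\<dots> = (\<Sum>a<m. (y a)^2)" by (simp add: power2_eq_square)
    finally show ?thesis .
  qed
  obtain a0 where a0: "a0 < m" "y a0 \<noteq> 0" using ynz by blast
  have "ip n x x \<ge> (y a0)^2" unfolding F6
    by (rule member_le_sum) (use a0 in auto)
  moreover have "(y a0)^2 > 0" using a0 by simp
  ultimately have xpos: "ip n x x > 0" by linarith
  define c where "c = sqrt (ip n x x)"
  have cpos: "c > 0" using xpos unfolding c_def by simp
  define z where "z r = x r / c" for r
  have "ip n z z = ip n x x / c^2" unfolding z_def ip_def by (simp add: sum_divide_distrib power2_eq_square)
  also have "\<dots> = 1" using cpos xpos unfolding c_def by simp
  finally have z1: "ip n z z = 1" .
  have z2: "\<forall>i\<in>{..<k}. ip n (v i) z = 0"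
  proof
    fix i assume "i \<in> {..<k}"
    hence "ip n (v i) x = 0" using F5 by simp
    thus "ip n (v i) z = 0" unfolding z_def ip_def by (simp add: sum_divide_distrib[symmetric])
  qed
  have z3: "mv n B z r = lm * z r" if "r < n" for r
  proof -
    have "mv n B z r = mv n B x r / c" unfolding z_def mv_def by (simp add: sum_divide_distrib)
    thus ?thesis using F4[OF that] unfolding z_def by simp
  qed
  have o3: "orthon n (insert k {..<k}) (v(k := z))"
    by (rule orthon_insert[OF vo _ z1 z2]) simp
  have "{..<Suc k} = insert k {..<k}" by auto
  hence o4: "orthon n {..<Suc k} (v(k := z))" using o3 by simp
  have "\<forall>i<Suc k. \<forall>r<n. mv n B ((v(k := z)) i) r = (lam(k := lm)) i * (v(k := z)) i r"
    using ve z3 less_Suc_eq by auto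
  thus ?case using o4 by blast
qed

lemma spectral:
  fixes B :: "nat \<Rightarrow> nat \<Rightarrow> real"
  assumes sym: "\<forall>i<n. \<forall>j<n. B i j = B j i"
  shows "\<exists>v lam. orthon n {..<n} v \<and> (\<forall>i<n. \<forall>r<n. mv n B (v i) r = lam i * v i r)"
  using spectral_aux[OF sym order_refl] .

lemma orthon_rows:
  assumes o: "orthon n {..<n} v" and k: "k < n" and j: "j < n"
  shows "(\<Sum>a<n. v a k * v a j) = (if k = j then 1 else 0)"
proof -
  have "unitv j k = (\<Sum>a<n. ip n (v a) (unitv j) * v a k)" by (rule orthon_expand[OF o k])
  also have "\<dots> = (\<Sum>a<n. v a j * v a k)" using ip_unitv[OF j] by simp
  finally show ?thesis unfolding unitv_def by (simp add: mult.commute)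
qed

lemma svd_exists: "\<exists>U S V. is_svd n G U S V"
proof -
  define B where "B k l = (\<Sum>r<n. G r k * G r l)" for k l
  have sym: "\<forall>i<n. \<forall>j<n. B i j = B j i" unfolding B_def by (simp add: mult.commute)
  obtain v lam where vo: "orthon n {..<n} v" and ve: "\<forall>i<n. \<forall>r<n. mv n B (v i) r = lam i * v i r"
    using spectral[OF sym] by blast
  define g where "g i = mv n G (v i)" for i
  have gg: "ip n (g i) (g j) = ip n (v i) (mv n B (v j))" for i j
  proof -
    have "ip n (g i) (g j) = (\<Sum>r<n. \<Sum>l<n. \<Sum>k<n. v i k * (G r k * G r l * v j l))"
      unfolding ip_def g_def mv_def by (simp add: sum_distrib_left sum_distrib_right mult_ac)
    also have "\<dots> = (\<Sum>r<n. \<Sum>k<n. \<Sum>l<n. v i k * (G r k * G r l * v j l))"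
      by (rule sum.cong[OF refl], rule sum.swap)
    also have "\<dots> = (\<Sum>k<n. \<Sum>r<n. \<Sum>l<n. v i k * (G r k * G r l * v j l))" by (rule sum.swap)
    also have "\<dots> = (\<Sum>k<n. \<Sum>l<n. \<Sum>r<n. v i k * (G r k * G r l * v j l))"
      by (rule sum.cong[OF refl], rule sum.swap)
    also have "\<dots> = ip n (v i) (mv n B (v j))"
      unfolding ip_def mv_def B_def by (simp add: sum_distrib_left sum_distrib_right mult_ac)
    finally show ?thesis .
  qed
  have gg2: "ip n (g i) (g j) = (if i = j then lam j else 0)" if "i < n" "j < n" for i j
  proof -
    have "ip n (g i) (g j) = ip n (\<lambda>r. lam j * v j r) (v i)"
      unfolding gg ip_sym[of n "v i"] by (rule ip_cong) (use ve that in simp)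
    also have "\<dots> = lam j * ip n (v j) (v i)" unfolding ip_def by (simp add: sum_distrib_left mult_ac)
    also have "\<dots> = (if i = j then lam j else 0)" using vo that unfolding orthon_def by auto
    finally show ?thesis .
  qed
  have lampos: "lam j \<ge> 0" if "j < n" for j
    using gg2[OF that that] ip_self_nonneg[of n "g j"] by simp
  define s where "s j = sqrt (lam j)" for j
  define I where "I = {j. j < n \<and> lam j > 0}"
  define u where "u j = (\<lambda>r. g j r / s j)" for j
  have uo: "orthon n I u" unfolding orthon_def
  proof (intro ballI)
    fix i j assume i: "i \<in> I" and j: "j \<in> I"
    have "ip n (u i) (u j) = ip n (g i) (g j) / (s i * s j)"
      unfolding u_def ip_def by (simp add: sum_divide_distrib)
    also have "\<dots> = (if i = j then 1 else 0)"
      using gg2[of i j] i j unfolding I_def s_def by auto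
    finally show "ip n (u i) (u j) = (if i = j then 1 else 0)" .
  qed
  obtain u' where u'1: "\<forall>i\<in>I. u' i = u i" and u'2: "orthon n {..<n} u'"
    using orthon_complete[OF _ uo] unfolding I_def by blast
  define U where "U r j = u' j r" for r j
  define V where "V r j = v j r" for r j
  define S where "S i j = (if i = j then s i else 0)" for i j
  have sg: "s a * u' a r = g a r" if a: "a < n" and r: "r < n" for a r
  proof (cases "a \<in> I")
    case True
    hence "s a > 0" unfolding I_def s_def by simp
    thus ?thesis using u'1 True unfolding u_def by simp
  next
    case False
    hence "lam a = 0" using lampos[OF a] a unfolding I_def by simp
    moreover have "ip n (g a) (g a) = 0" using gg2[OF a a] calculation by simp
    ultimately show ?thesis unfolding s_def
      using ip_self_zero[of n "g a" r] r by simp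
  qed
  have "G i j = mmul n (mmul n U S) (mtrans V) i j" if i: "i < n" and j: "j < n" for i j
  proof -
    have "mmul n (mmul n U S) (mtrans V) i j = (\<Sum>a<n. s a * u' a i * v a j)"
    proof -
      have "mmul n U S i a = s a * u' a i" if "a < n" for a
      proof -
        have "mmul n U S i a = (\<Sum>b<n. if b = a then u' b i * s b else 0)"
          unfolding mmul_def U_def S_def by (intro sum.cong refl) auto
        also have "\<dots> = s a * u' a i" using that by simp
        finally show ?thesis .
      qed
      thus ?thesis unfolding mmul_def[of n "mmul n U S"] mtrans_def V_def
        by (intro sum.cong refl) auto
    qed
    also have "\<dots> = (\<Sum>a<n. g a i * v a j)" using sg i by simp
    also have "\<dots> = (\<Sum>a<n. \<Sum>k<n. G i k * (v a k * v a j))"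
      unfolding g_def mv_def sum_distrib_right by (rule sum.cong[OF refl], rule sum.cong[OF refl]) (simp add: mult_ac)
    also have "\<dots> = (\<Sum>k<n. \<Sum>a<n. G i k * (v a k * v a j))" by (rule sum.swap)
    also have "\<dots> = (\<Sum>k<n. G i k * (if k = j then 1 else 0))"
      using orthon_rows[OF vo _ j] by (simp add: sum_distrib_left[symmetric])
    also have "\<dots> = (\<Sum>k<n. if k = j then G i k else 0)" by (rule sum.cong) auto
    also have "\<dots> = G i j" using j by (simp add: sum.delta)
    finally show ?thesis by simp
  qed
  moreover have "orthogonal_mat n U" using u'2 unfolding Defs.orthogonal_mat_def orthon_def ip_def U_def by simp
  moreover have "orthogonal_mat n V" using vo unfolding Defs.orthogonal_mat_def orthon_def ip_def V_def by simp
  moreover have "\<forall>i<n. S i i \<ge> 0" unfolding S_def s_def using lampos by simp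
  moreover have "\<forall>i<n. \<forall>j<n. i \<noteq> j \<longrightarrow> S i j = 0" unfolding S_def by simp
  ultimately show ?thesis unfolding is_svd_def by blast
qed

lemma interp_exists:
  fixes f :: "real \<Rightarrow> real"
  assumes "finite X"
  shows "\<exists>p. \<forall>x\<in>X. poly p x = f x"
  using assms
proof (induction X rule: finite_induct)
  case empty
  show ?case by simp
next
  case (insert a X)
  obtain p where p: "\<forall>x\<in>X. poly p x = f x" using insert.IH by blast
  define q where "q = (\<Prod>x\<in>X. [:-x, 1:])"
  have qx: "poly q x = (\<Prod>y\<in>X. x - y)" for x unfolding q_def by (simp add: poly_prod)
  have qa: "poly q a \<noteq> 0" unfolding qx using insert.hyps by (simp add: prod_zero_iff)
  have q0: "poly q x = 0" if "x \<in> X" for x unfolding qx using insert.hyps that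
    by (simp add: prod_zero_iff)
  define p' where "p' = p + Polynomial.smult ((f a - poly p a) / poly q a) q"
  have "\<forall>x\<in>insert a X. poly p' x = f x"
    unfolding p'_def using p q0 qa by auto
  thus ?case by blast
qed

primrec Gp :: "nat \<Rightarrow> mat \<Rightarrow> nat \<Rightarrow> mat" where
  "Gp n G 0 = G"
| "Gp n G (Suc k) = mmul n (mmul n (Gp n G k) (mtrans G)) G"

lemma diag_prod:
  assumes o: "orthogonal_mat n V"
  shows "(\<Sum>b<n. (\<Sum>l<n. X l * V b l) * (\<Sum>l'<n. Y l' * V b l')) = (\<Sum>l<n. X l * Y l)"
proof -
  have "(\<Sum>b<n. (\<Sum>l<n. X l * V b l) * (\<Sum>l'<n. Y l' * V b l')) =
        (\<Sum>b<n. \<Sum>l'<n. \<Sum>l<n. X l * Y l' * (V b l * V b l'))"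
    by (simp add: sum_distrib_left sum_distrib_right mult_ac)
  also have "\<dots> = (\<Sum>b<n. \<Sum>l<n. \<Sum>l'<n. X l * Y l' * (V b l * V b l'))"
    by (rule sum.cong[OF refl], rule sum.swap)
  also have "\<dots> = (\<Sum>l<n. \<Sum>b<n. \<Sum>l'<n. X l * Y l' * (V b l * V b l'))" by (rule sum.swap)
  also have "\<dots> = (\<Sum>l<n. \<Sum>l'<n. \<Sum>b<n. X l * Y l' * (V b l * V b l'))"
    by (rule sum.cong[OF refl], rule sum.swap)
  also have "\<dots> = (\<Sum>l<n. \<Sum>l'<n. X l * Y l' * (if l = l' then 1 else 0))"
    using o unfolding Defs.orthogonal_mat_def
    by (intro sum.cong refl) (simp add: sum_distrib_left[symmetric])
  also have "\<dots> = (\<Sum>l<n. X l * Y l)"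
    by (rule sum.cong[OF refl]) (simp add: if_distrib sum.delta cong: if_cong)
  finally show ?thesis .
qed

lemma Gp_svd:
  assumes svd: "is_svd n G U S V" and i: "i < n" and j: "j < n"
  shows "Gp n G k i j = (\<Sum>l<n. U i l * S l l ^ (2*k+1) * V j l)"
  using i j
proof (induction k arbitrary: i j)
  have G: "G a b = (\<Sum>l<n. U a l * S l l * V b l)" if "a < n" "b < n" for a b
  proof -
    have "G a b = mmul n (mmul n U S) (mtrans V) a b" using svd that unfolding is_svd_def by blast
    also have "\<dots> = (\<Sum>l<n. (\<Sum>m<n. U a m * S m l) * V b l)" unfolding mmul_def mtrans_def by simp
    also have "\<dots> = (\<Sum>l<n. U a l * S l l * V b l)"
    proof (rule sum.cong[OF refl])
      fix l assume l: "l \<in> {..<n}"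
      have "(\<Sum>m<n. U a m * S m l) = (\<Sum>m<n. if m = l then U a m * S m l else 0)"
        using svd l unfolding is_svd_def by (intro sum.cong refl) auto
      also have "\<dots> = U a l * S l l" using l by simp
      finally show "(\<Sum>m<n. U a m * S m l) * V b l = U a l * S l l * V b l" by simp
    qed
    finally show ?thesis .
  qed
  {
    case 0
    thus ?case using G by simp
  next
    case (Suc k)
    have oU: "orthogonal_mat n U" and oV: "orthogonal_mat n V" using svd unfolding is_svd_def by auto
    have step1: "mmul n (Gp n G k) (mtrans G) i a = (\<Sum>l<n. (U i l * S l l ^ (2*k+2)) * U a l)" if a: "a < n" for a
    proof -
      have "mmul n (Gp n G k) (mtrans G) i a = (\<Sum>b<n. (\<Sum>l<n. (U i l * S l l ^ (2*k+1)) * V b l) * (\<Sum>l<n. (U a l * S l l) * V b l))"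
        unfolding mmul_def mtrans_def using Suc.IH[OF Suc.prems(1)] G[OF a]
        by (intro sum.cong refl) (simp add: mult_ac)
      also have "\<dots> = (\<Sum>l<n. (U i l * S l l ^ (2*k+1)) * (U a l * S l l))" by (rule diag_prod[OF oV])
      also have "\<dots> = (\<Sum>l<n. (U i l * S l l ^ (2*k+2)) * U a l)" by (simp add: mult_ac)
      finally show ?thesis .
    qed
    have "Gp n G (Suc k) i j = (\<Sum>a<n. (\<Sum>l<n. (U i l * S l l ^ (2*k+2)) * U a l) * (\<Sum>l<n. (S l l * V j l) * U a l))"
      unfolding Gp.simps mmul_def[of n "mmul n (Gp n G k) (mtrans G)"] using step1 G Suc.prems(2)
      by (intro sum.cong refl) (simp add: mmul_def mult_ac)
    also have "\<dots> = (\<Sum>l<n. (U i l * S l l ^ (2*k+2)) * (S l l * V j l))" by (rule diag_prod[OF oU])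
    also have "\<dots> = (\<Sum>l<n. U i l * S l l ^ (2 * Suc k + 1) * V j l)" by (simp add: mult_ac)
    finally show ?case .
  }
qed

lemma msgn_poly: "\<exists>N c. \<forall>i<n. \<forall>j<n. msgn n G i j = (\<Sum>k<N. c k * Gp n G k i j)"
proof -
  obtain U S V where svd: "is_svd n G U S V"
    using someI_ex[OF svd_exists[of n G]] by (metis (no_types, lifting) case_prodE)
  define T where "T = (SOME (U, S, V). is_svd n G U S V)"
  obtain U S V where T: "T = (U, S, V)" by (cases T) auto
  have svd: "is_svd n G U S V"
  proof -
    have "(case T of (U, S, V) \<Rightarrow> is_svd n G U S V)"
      unfolding T_def by (rule someI_ex) (use svd_exists[of n G] in auto)
    thus ?thesis using T by simp
  qed
  have ms: "msgn n G = mmul n (mmul n U (\<lambda>i j. sgn (S i j))) (mtrans V)"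
    unfolding msgn_def T_def[symmetric] T by simp
  define X where "X = {(S l l)^2 | l. l < n \<and> S l l > 0}"
  have fX: "finite X" unfolding X_def by simp
  obtain p where p: "\<forall>x\<in>X. poly p x = 1 / sqrt x" using interp_exists[OF fX, of "\<lambda>x. 1 / sqrt x"] by blast
  define N where "N = Suc (degree p)"
  define c where "c = coeff p"
  have key: "(\<Sum>k<N. c k * S l l ^ (2*k+1)) = sgn (S l l)" if l: "l < n" for l
  proof -
    have "(\<Sum>k<N. c k * S l l ^ (2*k+1)) = S l l * (\<Sum>k<N. c k * ((S l l)^2) ^ k)"
    proof -
      have pw: "S l l ^ (2*k+1) = S l l * ((S l l)^2) ^ k" for k
      proof -
        have "S l l ^ (2*k+1) = S l l * S l l ^ (2*k)" by simp
        also have "S l l ^ (2*k) = ((S l l)^2) ^ k" by (rule power_mult)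
        finally show ?thesis .
      qed
      show ?thesis unfolding pw sum_distrib_left by (rule sum.cong[OF refl]) (simp add: mult_ac)
    qed
    also have "(\<Sum>k<N. c k * ((S l l)^2) ^ k) = poly p ((S l l)^2)"
      unfolding N_def c_def poly_altdef lessThan_Suc_atMost by simp
    finally have e: "(\<Sum>k<N. c k * S l l ^ (2*k+1)) = S l l * poly p ((S l l)^2)" .
    have nn: "S l l \<ge> 0" using svd l unfolding is_svd_def by blast
    show ?thesis
    proof (cases "S l l > 0")
      case True
      hence "(S l l)^2 \<in> X" unfolding X_def using l by blast
      hence "poly p ((S l l)^2) = 1 / S l l" using p nn by simp
      thus ?thesis using e True by simp
    next
      case False
      hence "S l l = 0" using nn by simp
      thus ?thesis using e by simp
    qed
  qed
  have "msgn n G i j = (\<Sum>k<N. c k * Gp n G k i j)" if i: "i < n" and j: "j < n" for i j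
  proof -
    have "(\<Sum>k<N. c k * Gp n G k i j) = (\<Sum>k<N. \<Sum>l<n. c k * (U i l * S l l ^ (2*k+1) * V j l))"
      using Gp_svd[OF svd i j] by (simp add: sum_distrib_left)
    also have "\<dots> = (\<Sum>l<n. \<Sum>k<N. c k * (U i l * S l l ^ (2*k+1) * V j l))" by (rule sum.swap)
    also have "\<dots> = (\<Sum>l<n. U i l * (\<Sum>k<N. c k * S l l ^ (2*k+1)) * V j l)"
      by (rule sum.cong[OF refl]) (simp add: sum_distrib_left sum_distrib_right mult_ac)
    also have "\<dots> = (\<Sum>l<n. U i l * sgn (S l l) * V j l)" using key by simp
    also have "\<dots> = msgn n G i j"
      unfolding ms mmul_def mtrans_def
    proof (rule sum.cong[OF refl])
      fix l assume l: "l \<in> {..<n}"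
      have "(\<Sum>m<n. U i m * sgn (S m l)) = (\<Sum>m<n. if m = l then U i m * sgn (S m l) else 0)"
        using svd l unfolding is_svd_def by (intro sum.cong refl) auto
      also have "\<dots> = U i l * sgn (S l l)" using l by simp
      finally show "U i l * sgn (S l l) * V j l = (\<Sum>m<n. U i m * sgn (S m l)) * V j l" by simp
    qed
    finally show ?thesis by simp
  qed
  thus ?thesis by blast
qed

definition eqK :: "nat \<Rightarrow> mat \<Rightarrow> mat \<Rightarrow> bool" where
  "eqK n A B \<longleftrightarrow> (\<forall>i<n. \<forall>j<n. A i j = B i j)"

definition idm :: mat where "idm = (\<lambda>i j. if i = j then 1 else 0)"

lemma eqK_refl[simp]: "eqK n A A" unfolding eqK_def by simp
lemma eqK_sym: "eqK n A B \<Longrightarrow> eqK n B A" unfolding eqK_def by simp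
lemma eqK_trans: "eqK n A B \<Longrightarrow> eqK n B C \<Longrightarrow> eqK n A C" unfolding eqK_def by simp

lemma mmul_assoc: "mmul n (mmul n A B) C = mmul n A (mmul n B C)"
proof (intro ext)
  fix i j
  have "mmul n (mmul n A B) C i j = (\<Sum>k<n. \<Sum>l<n. A i l * B l k * C k j)"
    unfolding mmul_def by (simp add: sum_distrib_right)
  also have "\<dots> = (\<Sum>l<n. \<Sum>k<n. A i l * B l k * C k j)" by (rule sum.swap)
  also have "\<dots> = mmul n A (mmul n B C) i j"
    unfolding mmul_def by (simp add: sum_distrib_left mult_ac)
  finally show "mmul n (mmul n A B) C i j = mmul n A (mmul n B C) i j" .
qed

lemma mtrans_mmul: "mtrans (mmul n A B) = mmul n (mtrans B) (mtrans A)"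
  unfolding mtrans_def mmul_def by (simp add: mult.commute)

lemma mtrans_mtrans[simp]: "mtrans (mtrans A) = A"
  unfolding mtrans_def by simp

lemma mmul_eqK: "eqK n A A' \<Longrightarrow> eqK n B B' \<Longrightarrow> eqK n (mmul n A B) (mmul n A' B')"
  unfolding eqK_def mmul_def by simp

lemma mtrans_eqK: "eqK n A B \<Longrightarrow> eqK n (mtrans A) (mtrans B)"
  unfolding eqK_def mtrans_def by simp

lemma orth_eqK: "orthogonal_mat n E \<Longrightarrow> eqK n (mmul n (mtrans E) E) idm"
  unfolding eqK_def mmul_def mtrans_def idm_def Defs.orthogonal_mat_def by simp

lemma mmul_idm_left: "eqK n (mmul n idm X) X"
  unfolding eqK_def
proof (intro allI impI)
  fix i j assume i: "i < n" and "j < n"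
  have "mmul n idm X i j = (\<Sum>k<n. if i = k then X k j else 0)"
    unfolding mmul_def idm_def by (rule sum.cong) auto
  also have "\<dots> = X i j" using i by simp
  finally show "mmul n idm X i j = X i j" .
qed

lemma mmul_idm_right: "eqK n (mmul n X idm) X"
  unfolding eqK_def mmul_def idm_def by (simp add: if_distrib cong: if_cong)

lemma orth_cancel: "orthogonal_mat n E \<Longrightarrow> eqK n (mmul n (mtrans E) (mmul n E Z)) Z"
  unfolding mmul_assoc[symmetric]
  by (rule eqK_trans[OF mmul_eqK[OF orth_eqK eqK_refl] mmul_idm_left])

lemma orth_cancel_right: "orthogonal_mat n E \<Longrightarrow> eqK n (mmul n Z (mmul n (mtrans E) E)) Z"
  by (rule eqK_trans[OF mmul_eqK[OF eqK_refl orth_eqK] mmul_idm_right])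

lemma Gp_eqK: "eqK n G G' \<Longrightarrow> eqK n (Gp n G k) (Gp n G' k)"
  by (induction k) (auto intro: mmul_eqK mtrans_eqK)

lemma Gp_conj:
  assumes oEt: "orthogonal_mat n Et" and oE: "orthogonal_mat n E"
  shows "eqK n (Gp n (mmul n (mmul n Et H) (mtrans E)) k) (mmul n (mmul n Et (Gp n H k)) (mtrans E))"
proof (induction k)
  case 0
  show ?case by simp
next
  case (Suc k)
  define G' where "G' = mmul n (mmul n Et H) (mtrans E)"
  have tG: "mtrans G' = mmul n (mmul n E (mtrans H)) (mtrans Et)"
    unfolding G'_def mtrans_mmul mmul_assoc by simp
  have "eqK n (Gp n G' (Suc k)) (mmul n (mmul n (mmul n (mmul n Et (Gp n H k)) (mtrans E)) (mtrans G')) G')"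
    unfolding Gp.simps using Suc.IH[folded G'_def] by (intro mmul_eqK) auto
  also have "mmul n (mmul n (mmul n (mmul n Et (Gp n H k)) (mtrans E)) (mtrans G')) G' =
     mmul n Et (mmul n (Gp n H k) (mmul n (mtrans E) (mmul n E (mmul n (mtrans H) (mmul n (mtrans Et) (mmul n Et (mmul n H (mtrans E))))))))"
    unfolding tG unfolding G'_def by (simp only: mmul_assoc)
  finally have 1: "eqK n (Gp n G' (Suc k)) \<dots>" .
  have 2: "eqK n (mmul n (mtrans Et) (mmul n Et (mmul n H (mtrans E)))) (mmul n H (mtrans E))"
    by (rule orth_cancel[OF oEt])
  have 3: "eqK n (mmul n (mtrans E) (mmul n E (mmul n (mtrans H) (mmul n (mtrans Et) (mmul n Et (mmul n H (mtrans E)))))))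
                 (mmul n (mtrans H) (mmul n H (mtrans E)))"
    by (rule eqK_trans[OF orth_cancel[OF oE]]) (intro mmul_eqK eqK_refl 2)
  have "eqK n (Gp n G' (Suc k)) (mmul n Et (mmul n (Gp n H k) (mmul n (mtrans H) (mmul n H (mtrans E)))))"
    by (rule eqK_trans[OF 1]) (intro mmul_eqK eqK_refl 3)
  also have "mmul n Et (mmul n (Gp n H k) (mmul n (mtrans H) (mmul n H (mtrans E)))) =
             mmul n (mmul n Et (Gp n H (Suc k))) (mtrans E)"
    unfolding Gp.simps by (simp only: mmul_assoc)
  finally show ?case unfolding G'_def .
qed

lemma mmul_lin:
  "mmul n (mmul n A (\<lambda>i j. \<Sum>k<N. c k * F k i j)) B i j = (\<Sum>k<N. c k * mmul n (mmul n A (F k)) B i j)"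
proof -
  have "mmul n (mmul n A (\<lambda>i j. \<Sum>k<N. c k * F k i j)) B i j =
        (\<Sum>a<n. \<Sum>b<n. \<Sum>k<N. c k * (A i b * F k b a * B a j))"
    unfolding mmul_def by (simp add: sum_distrib_left sum_distrib_right mult_ac)
  also have "\<dots> = (\<Sum>a<n. \<Sum>k<N. \<Sum>b<n. c k * (A i b * F k b a * B a j))"
    by (rule sum.cong[OF refl], rule sum.swap)
  also have "\<dots> = (\<Sum>k<N. \<Sum>a<n. \<Sum>b<n. c k * (A i b * F k b a * B a j))"
    by (rule sum.swap)
  also have "\<dots> = (\<Sum>k<N. c k * mmul n (mmul n A (F k)) B i j)"
    unfolding mmul_def by (simp add: sum_distrib_left sum_distrib_right mult_ac)
  finally show ?thesis .
qed

lemma msgn_cong: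
  assumes "eqK n G G'"
  shows "msgn n G = msgn n G'"
proof -
  have "is_svd n G = is_svd n G'"
    using assms unfolding eqK_def by (intro ext) (simp add: is_svd_def)
  thus ?thesis unfolding msgn_def by simp
qed

lemma msgn_conj:
  assumes oEt: "orthogonal_mat n Et" and oE: "orthogonal_mat n E"
    and G: "eqK n G (mmul n (mmul n Et H) (mtrans E))"
  shows "\<exists>N c. eqK n (mmul n (mmul n (mtrans Et) (msgn n G)) E) (\<lambda>i j. \<Sum>k<N. c k * Gp n H k i j)"
proof -
  define G' where "G' = mmul n (mmul n Et H) (mtrans E)"
  have ms: "msgn n G = msgn n G'" using msgn_cong[OF G] unfolding G'_def .
  obtain N c where Nc: "\<forall>i<n. \<forall>j<n. msgn n G' i j = (\<Sum>k<N. c k * Gp n G' k i j)"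
    using msgn_poly by blast
  have "eqK n (mmul n (mmul n (mtrans Et) (msgn n G)) E)
              (mmul n (mmul n (mtrans Et) (\<lambda>i j. \<Sum>k<N. c k * Gp n G' k i j)) E)"
    unfolding ms using Nc by (intro mmul_eqK eqK_refl) (simp add: eqK_def)
  moreover have "eqK n (mmul n (mmul n (mtrans Et) (\<lambda>i j. \<Sum>k<N. c k * Gp n G' k i j)) E)
                       (\<lambda>i j. \<Sum>k<N. c k * Gp n H k i j)"
  proof -
    have "eqK n (mmul n (mmul n (mtrans Et) (Gp n G' k)) E) (Gp n H k)" for k
    proof -
      have "eqK n (mmul n (mmul n (mtrans Et) (Gp n G' k)) E)
                  (mmul n (mmul n (mtrans Et) (mmul n (mmul n Et (Gp n H k)) (mtrans E))) E)"
        unfolding G'_def by (intro mmul_eqK eqK_refl Gp_conj oEt oE)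
      also have "mmul n (mmul n (mtrans Et) (mmul n (mmul n Et (Gp n H k)) (mtrans E))) E
                 = mmul n (mtrans Et) (mmul n Et (mmul n (Gp n H k) (mmul n (mtrans E) E)))"
        by (simp only: mmul_assoc)
      finally have 1: "eqK n (mmul n (mmul n (mtrans Et) (Gp n G' k)) E) \<dots>" .
      have 2: "eqK n (mmul n (mtrans Et) (mmul n Et (mmul n (Gp n H k) (mmul n (mtrans E) E))))
                  (mmul n (Gp n H k) (mmul n (mtrans E) E))" by (rule orth_cancel[OF oEt])
      have 3: "eqK n (mmul n (Gp n H k) (mmul n (mtrans E) E)) (Gp n H k)" by (rule orth_cancel_right[OF oE])
      show ?thesis using eqK_trans[OF 1 eqK_trans[OF 2 3]] .
    qed
    thus ?thesis unfolding eqK_def mmul_lin by simp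
  qed
  ultimately show ?thesis using eqK_trans by blast
qed

lemma logit_pert:
  assumes a: "a < K" and b: "b < K"
  shows "logit K Et E (\<lambda>x y. W x y + s * (if x = a \<and> y = b then 1 else 0)) i j
         = logit K Et E W i j + s * (Et a i * E b j)"
proof -
  have "logit K Et E (\<lambda>x y. W x y + s * (if x = a \<and> y = b then 1 else 0)) i j
     = (\<Sum>x<K. \<Sum>y<K. Et x i * W x y * E y j) + (\<Sum>x<K. \<Sum>y<K. if x = a \<and> y = b then s * (Et x i * E y j) else 0)"
    unfolding logit_def by (simp add: sum.distrib[symmetric] algebra_simps, intro sum.cong refl, simp)
  also have "(\<Sum>x<K. \<Sum>y<K. if x = a \<and> y = b then s * (Et x i * E y j) else 0) = s * (Et a i * E b j)"
  proof -
    have "(\<Sum>x<K. \<Sum>y<K. if x = a \<and> y = b then s * (Et x i * E y j) else 0)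
        = (\<Sum>x<K. if x = a then (\<Sum>y<K. if y = b then s * (Et x i * E y j) else 0) else 0)"
      by (rule sum.cong[OF refl]) auto
    also have "\<dots> = s * (Et a i * E b j)" using a b by simp
    finally show ?thesis .
  qed
  finally show ?thesis unfolding logit_def by simp
qed

lemma loss_grad:
  assumes K: "K > 0" and a: "a < K" and b: "b < K"
  shows "grad (loss K p Et E) W a b =
    (\<Sum>k<K. \<Sum>j<K. Et a k * (p j * (phat K Et E W k j - (if k = j then 1 else 0))) * E b j)"
proof -
  define L where "L k j = logit K Et E W k j" for k j
  define c where "c k j = Et a k * E b j" for k j
  define Z where "Z j = (\<Sum>k<K. exp (L k j))" for j
  have Zpos: "\<And>s j. (\<Sum>k<K. exp (L k j + s * c k j)) > 0"
    using K by (intro sum_pos) auto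
  have Zne: "\<And>s j. (\<Sum>k<K. exp (L k j + s * c k j)) \<noteq> 0"
    using Zpos by (metis less_irrefl)
  have feq: "(\<lambda>s. loss K p Et E (\<lambda>x y. W x y + s * (if x = a \<and> y = b then 1 else 0)))
     = (\<lambda>s. - (\<Sum>j<K. p j * ((L j j + s * c j j) - ln (\<Sum>k<K. exp (L k j + s * c k j)))))"
  proof (intro ext)
    fix s
    show "loss K p Et E (\<lambda>x y. W x y + s * (if x = a \<and> y = b then 1 else 0))
      = - (\<Sum>j<K. p j * ((L j j + s * c j j) - ln (\<Sum>k<K. exp (L k j + s * c k j))))"
      unfolding loss_def phat_def logit_pert[OF a b] L_def[symmetric] c_def[symmetric]
      using Zpos Zne by (simp add: ln_div)
  qed
  have D: "((\<lambda>s. - (\<Sum>j<K. p j * ((L j j + s * c j j) - ln (\<Sum>k<K. exp (L k j + s * c k j)))))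
      has_real_derivative (- (\<Sum>j<K. p j * (c j j - (\<Sum>k<K. exp (L k j + 0 * c k j) * c k j) / (\<Sum>k<K. exp (L k j + 0 * c k j)))))) (at 0)"
    using Zpos by (auto intro!: derivative_eq_intros simp: field_simps)
  have "grad (loss K p Et E) W a b = - (\<Sum>j<K. p j * (c j j - (\<Sum>k<K. exp (L k j) * c k j) / Z j))"
    unfolding grad_def feq using DERIV_imp_deriv[OF D] by (simp add: Z_def)
  also have "\<dots> = (\<Sum>j<K. \<Sum>k<K. c k j * (p j * (exp (L k j) / Z j - (if k = j then 1 else 0))))"
  proof -
    have "- (\<Sum>j<K. p j * (c j j - (\<Sum>k<K. exp (L k j) * c k j) / Z j))
       = (\<Sum>j<K. p j * ((\<Sum>k<K. exp (L k j) * c k j) / Z j - c j j))"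
      by (simp add: sum_negf[symmetric] algebra_simps)
    also have "\<dots> = (\<Sum>j<K. \<Sum>k<K. c k j * (p j * (exp (L k j) / Z j - (if k = j then 1 else 0))))"
    proof (rule sum.cong[OF refl])
      fix j assume j: "j \<in> {..<K}"
      have "(\<Sum>k<K. c k j * (p j * (exp (L k j) / Z j - (if k = j then 1 else 0))))
          = (\<Sum>k<K. p j * (exp (L k j) * c k j) / Z j - (if k = j then c k j * p j else 0))"
        by (rule sum.cong[OF refl]) (auto simp: algebra_simps)
      also have "\<dots> = (\<Sum>k<K. p j * (exp (L k j) * c k j) / Z j) - (\<Sum>k<K. if k = j then c k j * p j else 0)"
        by (rule sum_subtractf)
      also have "\<dots> = p j * ((\<Sum>k<K. exp (L k j) * c k j) / Z j - c j j)"
        using j by (simp add: sum_divide_distrib[symmetric] sum_distrib_left[symmetric] algebra_simps)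
      finally show "p j * ((\<Sum>k<K. exp (L k j) * c k j) / Z j - c j j) = (\<Sum>k<K. c k j * (p j * (exp (L k j) / Z j - (if k = j then 1 else 0))))" by simp
    qed
    finally show ?thesis .
  qed
  also have "\<dots> = (\<Sum>k<K. \<Sum>j<K. c k j * (p j * (exp (L k j) / Z j - (if k = j then 1 else 0))))"
    by (rule sum.swap)
  also have "\<dots> = (\<Sum>k<K. \<Sum>j<K. Et a k * (p j * (phat K Et E W k j - (if k = j then 1 else 0))) * E b j)"
    unfolding c_def phat_def L_def Z_def by (simp add: mult_ac)
  finally show ?thesis .
qed

definition sw :: "nat \<Rightarrow> nat \<Rightarrow> nat \<Rightarrow> nat" where
  "sw x y k = (if k = x then y else if k = y then x else k)"

definition invs :: "nat \<Rightarrow> nat \<Rightarrow> nat \<Rightarrow> mat \<Rightarrow> bool" where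
  "invs n x y A \<longleftrightarrow> (\<forall>i<n. \<forall>j<n. A (sw x y i) (sw x y j) = A i j)"

lemma sw_lt: "x < n \<Longrightarrow> y < n \<Longrightarrow> k < n \<Longrightarrow> sw x y k < n"
  unfolding sw_def by auto

lemma sw_sw[simp]: "sw x y (sw x y k) = k"
  unfolding sw_def by auto

lemma sum_sw:
  assumes "x < n" "y < n"
  shows "(\<Sum>k<n. f (sw x y k)) = (\<Sum>k<n. f k)"
proof -
  have "bij_betw (sw x y) {..<n} {..<n}"
    by (rule bij_betwI[where g = "sw x y"]) (use assms sw_lt in auto)
  thus ?thesis by (rule sum.reindex_bij_betw)
qed

lemma invs_mmul:
  assumes xy: "x < n" "y < n" and A: "invs n x y A" and B: "invs n x y B"
  shows "invs n x y (mmul n A B)"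
  unfolding invs_def
proof (intro allI impI)
  fix i j assume i: "i < n" and j: "j < n"
  have "mmul n A B (sw x y i) (sw x y j) = (\<Sum>k<n. A (sw x y i) (sw x y k) * B (sw x y k) (sw x y j))"
    unfolding mmul_def by (rule sum_sw[symmetric, OF xy])
  also have "\<dots> = (\<Sum>k<n. A i k * B k j)"
    using A B i j unfolding invs_def by (intro sum.cong refl) auto
  finally show "mmul n A B (sw x y i) (sw x y j) = mmul n A B i j" unfolding mmul_def .
qed

lemma invs_mtrans: "invs n x y A \<Longrightarrow> invs n x y (mtrans A)"
  unfolding invs_def mtrans_def by simp

lemma invs_Gp: "x < n \<Longrightarrow> y < n \<Longrightarrow> invs n x y G \<Longrightarrow> invs n x y (Gp n G k)"
  by (induction k) (auto intro: invs_mmul invs_mtrans)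

lemma invs_lin: "(\<And>k. invs n x y (F k)) \<Longrightarrow> invs n x y (\<lambda>i j. \<Sum>k<N. c k * F k i j)"
  unfolding invs_def by simp

lemma invs_eqK: "x < n \<Longrightarrow> y < n \<Longrightarrow> eqK n A B \<Longrightarrow> invs n x y A \<Longrightarrow> invs n x y B"
  unfolding invs_def eqK_def using sw_lt by metis

lemma Wh_diff:
  "mmul n (mmul n A (\<lambda>a b. X a b - 1 * Y a b)) B i j = mmul n (mmul n A X) B i j - mmul n (mmul n A Y) B i j"
  unfolding mmul_def by (simp add: algebra_simps sum_subtractf)

lemma logit_Wh: "logit K Et E W i j = mmul K (mmul K (mtrans Et) W) E i j"
  unfolding logit_def mmul_def mtrans_def by (simp add: sum_distrib_right, rule sum.swap)

lemma grad_eqK: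
  assumes K: "K > 0"
  shows "eqK K (grad (loss K p Et E) W)
     (mmul K (mmul K Et (\<lambda>k j. p j * (phat K Et E W k j - (if k = j then 1 else 0)))) (mtrans E))"
  unfolding eqK_def
proof (intro allI impI)
  fix a b assume a: "a < K" and b: "b < K"
  show "grad (loss K p Et E) W a b =
    mmul K (mmul K Et (\<lambda>k j. p j * (phat K Et E W k j - (if k = j then 1 else 0)))) (mtrans E) a b"
    unfolding loss_grad[OF K a b] mmul_def mtrans_def sum_distrib_right
    by (rule sum.swap)
qed

lemma Gh_invs:
  assumes xy: "x < K" "y < K" and p: "\<And>j. p (sw x y j) = p j"
    and W: "invs K x y (mmul K (mmul K (mtrans Et) W) E)"
  shows "invs K x y (\<lambda>k j. p j * (phat K Et E W k j - (if k = j then 1 else 0)))"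
  unfolding invs_def
proof (intro allI impI)
  fix i j assume i: "i < K" and j: "j < K"
  let ?Wh = "mmul K (mmul K (mtrans Et) W) E"
  have Wi: "?Wh (sw x y u) (sw x y v) = ?Wh u v" if "u < K" "v < K" for u v
    using W that unfolding invs_def by blast
  have den: "(\<Sum>k<K. exp (logit K Et E W k (sw x y j))) = (\<Sum>k<K. exp (logit K Et E W k j))"
  proof -
    have "(\<Sum>k<K. exp (logit K Et E W k (sw x y j))) = (\<Sum>k<K. exp (logit K Et E W (sw x y k) (sw x y j)))"
      by (rule sum_sw[symmetric, OF xy])
    also have "\<dots> = (\<Sum>k<K. exp (logit K Et E W k j))"
      unfolding logit_Wh using Wi j by (intro sum.cong refl) auto
    finally show ?thesis .
  qed
  have ph: "phat K Et E W (sw x y i) (sw x y j) = phat K Et E W i j"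
    unfolding phat_def den unfolding logit_Wh using Wi i j by simp
  have "(sw x y i = sw x y j) = (i = j)" by (metis sw_sw)
  thus "p (sw x y j) * (phat K Et E W (sw x y i) (sw x y j) - (if sw x y i = sw x y j then 1 else 0)) =
        p j * (phat K Et E W i j - (if i = j then 1 else 0))"
    using ph p by simp
qed

lemma main_invs:
  assumes K: "K > 0" and xy: "x < K" "y < K" and p: "\<And>j. p (sw x y j) = p j"
    and oEt: "orthogonal_mat K Et" and oE: "orthogonal_mat K E"
  shows "invs K x y (mmul K (mmul K (mtrans Et) (muon K (loss K p Et E) 1 (\<lambda>_ _. 0) t)) E)"
proof (induction t)
  case 0
  show ?case unfolding invs_def by (simp add: mmul_def)
next
  case (Suc t)
  define W where "W = muon K (loss K p Et E) 1 (\<lambda>_ _. 0) t"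
  define Gh where "Gh = (\<lambda>k j. p j * (phat K Et E W k j - (if k = j then 1 else 0)))"
  have IH: "invs K x y (mmul K (mmul K (mtrans Et) W) E)" using Suc.IH unfolding W_def .
  have Ghi: "invs K x y Gh" unfolding Gh_def by (rule Gh_invs[OF xy _ IH], rule p)
  obtain N c where Nc: "eqK K (mmul K (mmul K (mtrans Et) (msgn K (grad (loss K p Et E) W))) E)
      (\<lambda>i j. \<Sum>k<N. c k * Gp K Gh k i j)"
    using msgn_conj[OF oEt oE grad_eqK[OF K, of p Et E W, folded Gh_def]] by blast
  have "invs K x y (\<lambda>i j. \<Sum>k<N. c k * Gp K Gh k i j)"
    by (rule invs_lin) (rule invs_Gp[OF xy Ghi])
  hence M: "invs K x y (mmul K (mmul K (mtrans Et) (msgn K (grad (loss K p Et E) W))) E)"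
    using invs_eqK[OF xy eqK_sym[OF Nc]] by blast
  show ?case
    unfolding invs_def muon.simps W_def[symmetric] Wh_diff
    using IH M unfolding invs_def by simp
qed

lemma blk_div: fixes a C i :: nat shows "a < C \<Longrightarrow> (i * C + a) div C = i"
  by simp

lemma blk_lt: fixes a C i M :: nat shows "i < M \<Longrightarrow> a < C \<Longrightarrow> i * C + a < M * C"
proof -
  assume "i < M" "a < C"
  hence "i * C + a < i * C + C" by simp
  also have "\<dots> = (i + 1) * C" by simp
  also have "\<dots> \<le> M * C" using \<open>i < M\<close> by (intro mult_right_mono) auto
  finally show ?thesis .
qed

lemma blk_eq:
  fixes a b C i j :: nat
  assumes "a < C" "b < C"
  shows "(i * C + a = j * C + b) \<longleftrightarrow> (i = j \<and> a = b)"
proof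
  assume h: "i * C + a = j * C + b"
  have "i = j" using arg_cong[OF h, of "\<lambda>u. u div C"] assms by simp
  thus "i = j \<and> a = b" using h by simp
qed simp

lemma blk_eq0:
  fixes b C i j :: nat
  assumes "0 < C" "b < C"
  shows "(i * C = j * C + b) \<longleftrightarrow> (i = j \<and> b = 0)"
  using blk_eq[of 0 C b i j] assms by simp

theorem lemmaD2:
  fixes M C :: nat and pt :: "nat \<Rightarrow> real" and E Et :: mat
  assumes C2: "C \<ge> 2"
    and pt_dec: "\<forall>i j. i < j \<and> j < M \<longrightarrow> pt i > pt j"
    and pt_pos: "\<forall>i<M. pt i > 0"
    and pt_sum: "(\<Sum>i<M. pt i) = 1"
    and E_orth: "orthogonal_mat (M * C) E"
    and Et_orth: "orthogonal_mat (M * C) Et"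
  shows "\<forall>t i j a b. i < M \<and> j < M \<and> a < C \<and> b < C \<longrightarrow>
    (let K = M * C;
         p = (\<lambda>k. pt (k div C) / real C);
         W = muon K (loss K p Et E) 1 (\<lambda>_ _. 0) t;
         Wh = mmul K (mmul K (mtrans Et) W) E
     in Wh (i * C + a) (j * C + b) =
        (if i = j then (if a = b then Wh (i * C) (i * C) else Wh (i * C + 1) (i * C))
         else Wh (i * C) (j * C)))"
proof (intro allI impI)
  fix t i j a b
  assume H: "i < M \<and> j < M \<and> a < C \<and> b < C"
  hence i: "i < M" and j: "j < M" and a: "a < C" and b: "b < C" by auto
  define K where "K = M * C"
  define p where "p = (\<lambda>k. pt (k div C) / real C)"
  define Wh where "Wh = mmul K (mmul K (mtrans Et) (muon K (loss K p Et E) 1 (\<lambda>_ _. 0) t)) E"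
  have C0: "C > 0" using C2 by simp
  have C1: "1 < C" using C2 by simp
  have K0: "K > 0" unfolding K_def using i C0 by simp
  have lt: "u * C + v < K" if "u < M" "v < C" for u v
    unfolding K_def using blk_lt[OF that] .
  have lt0: "u * C < K" if "u < M" for u using lt[OF that C0] by simp
  have inv: "Wh (sw x y u) (sw x y v) = Wh u v"
    if xy: "x < K" "y < K" "x div C = y div C" and uv: "u < K" "v < K" for x y u v
  proof -
    have pp: "p (sw x y k) = p k" for k unfolding p_def sw_def using xy(3) by auto
    have "invs K x y Wh" unfolding Wh_def
      by (rule main_invs[OF K0 xy(1,2)], rule pp) (use Et_orth E_orth in \<open>simp_all add: K_def\<close>)
    thus ?thesis using uv unfolding invs_def by blast
  qed
  have R: "Wh (i * C + a) (j * C + b) =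
        (if i = j then (if a = b then Wh (i * C) (i * C) else Wh (i * C + 1) (i * C))
         else Wh (i * C) (j * C))"
  proof (cases "i = j")
    case False
    have e1: "Wh (i * C) (j * C + b) = Wh (i * C + a) (j * C + b)"
    proof -
      have "sw (i * C) (i * C + a) (i * C + a) = i * C" unfolding sw_def by simp
      moreover have "sw (i * C) (i * C + a) (j * C + b) = j * C + b"
        unfolding sw_def using False blk_eq[OF b a, of j i] blk_eq0[OF C0 b, of i j] by auto
      ultimately show ?thesis
        using inv[of "i * C" "i * C + a" "i * C + a" "j * C + b"] lt0[OF i] lt[OF i a] lt[OF j b] a
        by simp
    qed
    have e2: "Wh (i * C) (j * C) = Wh (i * C) (j * C + b)"
    proof -
      have "sw (j * C) (j * C + b) (j * C + b) = j * C" unfolding sw_def by simp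
      moreover have "sw (j * C) (j * C + b) (i * C) = i * C"
        unfolding sw_def using False blk_eq0[OF C0 b, of i j] C0 by auto
      ultimately show ?thesis
        using inv[of "j * C" "j * C + b" "i * C" "j * C + b"] lt0[OF i] lt0[OF j] lt[OF j b] b
        by simp
    qed
    show ?thesis using False e1 e2 by simp
  next
    case True
    show ?thesis
    proof (cases "a = b")
      case True
      have "sw (i * C) (i * C + a) (i * C + a) = i * C" unfolding sw_def by simp
      hence "Wh (i * C) (i * C) = Wh (i * C + a) (i * C + a)"
        using inv[of "i * C" "i * C + a" "i * C + a" "i * C + a"] lt0[OF i] lt[OF i a] a by simp
      thus ?thesis using \<open>i = j\<close> True by simp
    next
      case False
      define a' where "a' = (if a = 0 then b else a)"
      have a'0: "a' \<noteq> 0" and a'C: "a' < C" unfolding a'_def using False a b by auto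
      have s1: "sw (i * C + b) (i * C) (i * C + b) = i * C" unfolding sw_def by simp
      have s2: "sw (i * C + b) (i * C) (i * C + a) = i * C + a'"
        unfolding sw_def a'_def using False by auto
      have e1: "Wh (i * C + a') (i * C) = Wh (i * C + a) (i * C + b)"
        using inv[of "i * C + b" "i * C" "i * C + a" "i * C + b"] s1 s2 lt0[OF i] lt[OF i a] lt[OF i b] b
        by simp
      have s3: "sw (i * C + a') (i * C + 1) (i * C + a') = i * C + 1" unfolding sw_def by simp
      have s4: "sw (i * C + a') (i * C + 1) (i * C) = i * C" unfolding sw_def using a'0 by auto
      have e2: "Wh (i * C + 1) (i * C) = Wh (i * C + a') (i * C)"
        using inv[of "i * C + a'" "i * C + 1" "i * C + a'" "i * C"] s3 s4 lt0[OF i] lt[OF i a'C] lt[OF i C1] a'C C1 blk_div[OF C1, of i] blk_div[OF a'C, of i]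
        by simp
      show ?thesis using \<open>i = j\<close> False e1 e2 by simp
    qed
  qed
  show "let K = M * C;
         p = (\<lambda>k. pt (k div C) / real C);
         W = muon K (loss K p Et E) 1 (\<lambda>_ _. 0) t;
         Wh = mmul K (mmul K (mtrans Et) W) E
     in Wh (i * C + a) (j * C + b) =
        (if i = j then (if a = b then Wh (i * C) (i * C) else Wh (i * C + 1) (i * C))
         else Wh (i * C) (j * C))"
    using R unfolding Let_def Wh_def K_def p_def .
qed

end
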